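(* The ranges of the classical wave operators satisfy $\mathrm{ran}\,\Lambda^\pm\subseteq\mathscr D(\sqrt\omega)$.
   Context: $d\ge1$, $\mathfrak H=L^2(\mathbb R^d)$. Assumptions: $V:\mathbb R^d\to[0,\infty)$ locally integrable with $V(x)\ge C_0\langle x\rangle^{1+\nu}$ for some $C_0,\nu>0$, $\langle x\rangle=(1+|x|^2)^{1/2}$; $\omega(k)=\sqrt{k^2+m^2}$, $m>0$; $\chi\in C_0^\infty(\mathbb R^d)$. Energy space $\mathscr X=\mathscr D(\sqrt{-\Delta+V})\oplus\mathscr D(\sqrt\omega)$. S-KG system: $i\partial_tu=(-\Delta+V)u+\varphi_\chi u$, $i\partial_tz=\omega z+\omega^{-1/2}\chi\,\widehat{|u|^2}$, with $\varphi_\chi(x)=\int\omega(k)^{-1/2}(e^{ik\cdot x}\chi(k)\bar z(k)+e^{-ik\cdot x}\bar\chi(k)z(k))dk$; it is globally well-posed on $\mathscr X$ with flow $\Phi_t$. The classical wave operators $\Lambda^\pm:\mathscr X\to\mathfrak H$ are $\Lambda^\pm(u_0,z_0)=\mathrm{w\text{-}lim}_{t\to\pm\infty}e^{it\omega}z(t)$ (weak $L^2$ limits, which exist), where $(u(t),z(t))=\Phi_t(u_0,z_0)$. *)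

theory Defs
  imports "HOL-Analysis.Analysis"
begin

text \<open>Functions on R^d are modelled as functions on an arbitrary euclidean_space 'a
  (d = DIM('a)); the Fourier variable k lives in the same space, paired with x by the
  inner product.\<close>

definition jbr :: "'a::euclidean_space \<Rightarrow> real" where
  "jbr x = sqrt (1 + (norm x)\<^sup>2)"

definition omega :: "real \<Rightarrow> 'a::euclidean_space \<Rightarrow> real" where
  "omega m k = sqrt ((norm k)\<^sup>2 + m\<^sup>2)"

definition L2 :: "('a::euclidean_space \<Rightarrow> complex) \<Rightarrow> bool" where
  "L2 f \<longleftrightarrow> f \<in> borel_measurable lborel \<and> integrable lborel (\<lambda>x. (cmod (f x))\<^sup>2)"

definition ip :: "('a::euclidean_space \<Rightarrow> complex) \<Rightarrow> ('a \<Rightarrow> complex) \<Rightarrow> complex" where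
  "ip f g = (LINT x|lborel. cnj (f x) * g x)"

fun iter_partial :: "'a::euclidean_space list \<Rightarrow> ('a \<Rightarrow> complex) \<Rightarrow> 'a \<Rightarrow> complex" where
  "iter_partial [] f = f"
| "iter_partial (b # bs) f = (\<lambda>x. frechet_derivative (iter_partial bs f) (at x) b)"

definition smooth :: "('a::euclidean_space \<Rightarrow> complex) \<Rightarrow> bool" where
  "smooth f \<longleftrightarrow> (\<forall>bs. set bs \<subseteq> Basis \<longrightarrow> (\<forall>x. iter_partial bs f differentiable (at x)))"

definition test_fun :: "('a::euclidean_space \<Rightarrow> complex) \<Rightarrow> bool" where
  "test_fun f \<longleftrightarrow> smooth f \<and> compact (closure {x. f x \<noteq> 0})"

definition partial :: "'a::euclidean_space \<Rightarrow> ('a \<Rightarrow> complex) \<Rightarrow> 'a \<Rightarrow> complex" where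
  "partial b f x = frechet_derivative f (at x) b"

definition weak_deriv :: "'a::euclidean_space \<Rightarrow> ('a \<Rightarrow> complex) \<Rightarrow> ('a \<Rightarrow> complex) \<Rightarrow> bool" where
  "weak_deriv b u g \<longleftrightarrow> (\<forall>\<phi>. test_fun \<phi> \<longrightarrow>
      (LINT x|lborel. u x * partial b \<phi> x) = - (LINT x|lborel. g x * \<phi> x))"

definition wgrad :: "'a::euclidean_space \<Rightarrow> ('a \<Rightarrow> complex) \<Rightarrow> 'a \<Rightarrow> complex" where
  "wgrad b u = (SOME g. L2 g \<and> weak_deriv b u g)"

text \<open>Form domain D(sqrt(-Delta+V)) = {u in H^1 : sqrt V u in L^2}.\<close>
definition domH :: "('a::euclidean_space \<Rightarrow> real) \<Rightarrow> ('a \<Rightarrow> complex) \<Rightarrow> bool" where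
  "domH V u \<longleftrightarrow> L2 u \<and> L2 (\<lambda>x. complex_of_real (sqrt (V x)) * u x)
      \<and> (\<forall>b\<in>Basis. \<exists>g. L2 g \<and> weak_deriv b u g)"

text \<open>D(sqrt omega) (multiplication operator in Fourier space).\<close>
definition domW :: "real \<Rightarrow> ('a::euclidean_space \<Rightarrow> complex) \<Rightarrow> bool" where
  "domW m z \<longleftrightarrow> L2 z \<and> integrable lborel (\<lambda>k. omega m k * (cmod (z k))\<^sup>2)"

definition Xnorm2 :: "('a::euclidean_space \<Rightarrow> real) \<Rightarrow> real \<Rightarrow> ('a \<Rightarrow> complex) \<Rightarrow> ('a \<Rightarrow> complex) \<Rightarrow> real" where
  "Xnorm2 V m u z =
     (LINT x|lborel. (cmod (u x))\<^sup>2)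
   + (\<Sum>b\<in>Basis. LINT x|lborel. (cmod (wgrad b u x))\<^sup>2)
   + (LINT x|lborel. V x * (cmod (u x))\<^sup>2)
   + (LINT k|lborel. omega m k * (cmod (z k))\<^sup>2)"

text \<open>The quadratic form of -Delta+V, sesquilinear: q(phi,u) = <grad phi, grad u> + <V phi, u>.\<close>
definition qform :: "('a::euclidean_space \<Rightarrow> real) \<Rightarrow> ('a \<Rightarrow> complex) \<Rightarrow> ('a \<Rightarrow> complex) \<Rightarrow> complex" where
  "qform V \<phi> u = (\<Sum>b\<in>Basis. LINT x|lborel. cnj (partial b \<phi> x) * wgrad b u x)
      + (LINT x|lborel. complex_of_real (V x) * cnj (\<phi> x) * u x)"

definition fourier :: "('a::euclidean_space \<Rightarrow> complex) \<Rightarrow> 'a \<Rightarrow> complex" where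
  "fourier f k = complex_of_real ((2 * pi) powr (- real DIM('a) / 2))
      * (LINT x|lborel. exp (- \<i> * complex_of_real (k \<bullet> x)) * f x)"

definition phi_chi :: "real \<Rightarrow> ('a::euclidean_space \<Rightarrow> complex) \<Rightarrow> ('a \<Rightarrow> complex) \<Rightarrow> 'a \<Rightarrow> complex" where
  "phi_chi m chi z x = (LINT k|lborel. complex_of_real (omega m k powr (-1/2)) *
      (exp (\<i> * complex_of_real (k \<bullet> x)) * chi k * cnj (z k)
       + exp (- \<i> * complex_of_real (k \<bullet> x)) * cnj (chi k) * z k))"

text \<open>(u,z) is a global solution of the S-KG system in the energy space X:
  continuous R -> X, u solves the Schroedinger equation weakly (in integrated form against
  test functions), z solves the Klein-Gordon equation in Duhamel form.\<close>
definition SKG_solution ::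
  "('a::euclidean_space \<Rightarrow> real) \<Rightarrow> real \<Rightarrow> ('a \<Rightarrow> complex) \<Rightarrow>
   (real \<Rightarrow> 'a \<Rightarrow> complex) \<Rightarrow> (real \<Rightarrow> 'a \<Rightarrow> complex) \<Rightarrow> bool" where
  "SKG_solution V m chi u z \<longleftrightarrow>
     (\<forall>t. domH V (u t) \<and> domW m (z t))
   \<and> (\<forall>t. ((\<lambda>s. Xnorm2 V m (\<lambda>x. u s x - u t x) (\<lambda>k. z s k - z t k)) \<longlongrightarrow> 0) (at t))
   \<and> (\<forall>\<phi> t. test_fun \<phi> \<longrightarrow>
        ip \<phi> (u t) = ip \<phi> (u 0)
          - \<i> * (LBINT s=0..t. qform V \<phi> (u s) + ip \<phi> (\<lambda>x. phi_chi m chi (z s) x * u s x)))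
   \<and> (\<forall>t. AE k in lborel.
        z t k = exp (- \<i> * complex_of_real (t * omega m k)) * z 0 k
          - \<i> * (LBINT s=0..t. exp (- \<i> * complex_of_real ((t - s) * omega m k))
                 * complex_of_real (omega m k powr (-1/2)) * chi k
                 * fourier (\<lambda>x. complex_of_real ((cmod (u s x))\<^sup>2)) k))"

definition weak_L2_tendsto ::
  "(real \<Rightarrow> 'a::euclidean_space \<Rightarrow> complex) \<Rightarrow> ('a \<Rightarrow> complex) \<Rightarrow> real filter \<Rightarrow> bool" where
  "weak_L2_tendsto f g F \<longleftrightarrow> L2 g \<and> (\<forall>h. L2 h \<longrightarrow> ((\<lambda>t. ip h (f t)) \<longlongrightarrow> ip h g) F)"

end

theory Submission
  imports Defs
begin

lemma cnj_meas: "f \<in> borel_measurable M \<Longrightarrow> (\<lambda>x. cnj (f x)) \<in> borel_measurable M"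
  for f :: "_ \<Rightarrow> complex"
  by (rule measurable_compose[OF _ borel_measurable_continuous_onI[OF continuous_on_cnj[OF continuous_on_id]]]) simp

lemma rot_meas: "(\<lambda>x. exp (\<i> * complex_of_real (t * omega m x))) \<in> borel_measurable (borel :: 'a::euclidean_space measure)"
  unfolding omega_def by (intro borel_measurable_continuous_onI continuous_intros)

lemma L2_prod_integrable:
  fixes f g :: "'a::euclidean_space \<Rightarrow> complex"
  assumes "L2 f" "L2 g"
  shows "integrable lborel (\<lambda>x. cnj (f x) * g x)"
proof (rule Bochner_Integration.integrable_bound)
  show "integrable lborel (\<lambda>x. (cmod (f x))\<^sup>2 + (cmod (g x))\<^sup>2)"
    using assms unfolding L2_def by auto
  show "(\<lambda>x. cnj (f x) * g x) \<in> borel_measurable lborel"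
  proof -
    have "f \<in> borel_measurable lborel" "g \<in> borel_measurable lborel"
      using assms unfolding L2_def by auto
    then show ?thesis unfolding measurable_lborel2 by (intro borel_measurable_times cnj_meas)
  qed
  show "AE x in lborel. norm (cnj (f x) * g x) \<le> norm ((cmod (f x))\<^sup>2 + (cmod (g x))\<^sup>2)"
  proof (rule AE_I2)
    fix x
    have "cmod (f x) * cmod (g x) \<le> (cmod (f x))\<^sup>2 + (cmod (g x))\<^sup>2"
      using sum_squares_bound[of "cmod (f x)" "cmod (g x)"]
        mult_nonneg_nonneg[OF norm_ge_zero norm_ge_zero, of "f x" "g x"] by linarith
    then show "norm (cnj (f x) * g x) \<le> norm ((cmod (f x))\<^sup>2 + (cmod (g x))\<^sup>2)"
      by (simp add: norm_mult)
  qed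
qed

lemma omega_meas: "(\<lambda>k. omega m k) \<in> borel_measurable (lborel :: 'a::euclidean_space measure)"
  unfolding omega_def by measurable

theorem corollary4p3:
  fixes V :: "'a::euclidean_space \<Rightarrow> real" and chi :: "'a \<Rightarrow> complex"
    and m C0 \<nu> :: real
    and u z :: "real \<Rightarrow> 'a \<Rightarrow> complex" and \<Lambda> :: "'a \<Rightarrow> complex" and F :: "real filter"
  assumes V_nonneg: "\<forall>x. V x \<ge> 0"
    and V_meas: "V \<in> borel_measurable lborel"
    and V_locint: "\<forall>K. compact K \<longrightarrow> set_integrable lborel K V"
    and V_growth: "C0 > 0" "\<nu> > 0" "\<forall>x. V x \<ge> C0 * jbr x powr (1 + \<nu>)"
    and m_pos: "m > 0"
    and chi_test: "test_fun chi"
    and sol: "SKG_solution V m chi u z"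
    and F: "F = at_top \<or> F = at_bot"
    and lim: "weak_L2_tendsto (\<lambda>t k. exp (\<i> * complex_of_real (t * omega m k)) * z t k) \<Lambda> F"
  shows "domW m \<Lambda>"
proof -
  define z0 where "z0 = z 0"
  define S where "S = {k. chi k = 0}"
  have dz: "\<And>t. domW m (z t)" using sol unfolding SKG_solution_def by auto
  have L2z: "\<And>t. L2 (z t)" using dz unfolding domW_def by auto
  have L2z0: "L2 z0" using L2z z0_def by auto
  have intz0: "integrable lborel (\<lambda>k. omega m k * (cmod (z0 k))\<^sup>2)"
    using dz[of 0] unfolding domW_def z0_def by auto
  have L2L: "L2 \<Lambda>" using lim unfolding weak_L2_tendsto_def by auto
  have Lmeas: "\<Lambda> \<in> borel_measurable lborel" using L2L unfolding L2_def by auto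
  have z0meas: "z0 \<in> borel_measurable lborel" using L2z0 unfolding L2_def by auto
  have chi_cont: "continuous_on UNIV chi"
  proof -
    have "\<forall>x. chi differentiable (at x)"
      using chi_test unfolding test_fun_def smooth_def
      by (metis empty_subsetI empty_set iter_partial.simps(1))
    then show ?thesis
      by (simp add: continuous_at_imp_continuous_on differentiable_imp_continuous_within)
  qed
  have chimeas: "chi \<in> borel_measurable lborel"
    using chi_cont borel_measurable_continuous_onI by auto
  have Smeas: "S \<in> sets lborel"
    unfolding S_def using chimeas by measurable
  have const: "AE k in lborel. k \<in> S \<longrightarrow> exp (\<i> * complex_of_real (t * omega m k)) * z t k = z0 k" for t
  proof -
    have "AE k in lborel.
        z t k = exp (- \<i> * complex_of_real (t * omega m k)) * z 0 k
          - \<i> * (LBINT s=0..t. exp (- \<i> * complex_of_real ((t - s) * omega m k))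
                 * complex_of_real (omega m k powr (-1/2)) * chi k
                 * fourier (\<lambda>x. complex_of_real ((cmod (u s x))\<^sup>2)) k)"
      using sol unfolding SKG_solution_def by auto
    then show ?thesis
    proof (rule AE_mp, intro AE_I2 impI)
      fix k assume h: "z t k = exp (- \<i> * complex_of_real (t * omega m k)) * z 0 k
          - \<i> * (LBINT s=0..t. exp (- \<i> * complex_of_real ((t - s) * omega m k))
                 * complex_of_real (omega m k powr (-1/2)) * chi k
                 * fourier (\<lambda>x. complex_of_real ((cmod (u s x))\<^sup>2)) k)" and kS: "k \<in> S"
      have "chi k = 0" using kS S_def by auto
      then have "z t k = exp (- \<i> * complex_of_real (t * omega m k)) * z0 k"
        using h z0_def by simp
      then show "exp (\<i> * complex_of_real (t * omega m k)) * z t k = z0 k"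
        by (simp add: exp_minus_inverse mult.assoc[symmetric] exp_add[symmetric])
    qed
  qed
  define h where "h k = complex_of_real (indicator S k) * (\<Lambda> k - z0 k)" for k
  have hmeas: "h \<in> borel_measurable lborel"
    unfolding h_def using Smeas Lmeas z0meas by measurable
  have L2h: "L2 h"
    unfolding L2_def
  proof (intro conjI hmeas)
    show "integrable lborel (\<lambda>x. (cmod (h x))\<^sup>2)"
    proof (rule Bochner_Integration.integrable_bound)
      show "integrable lborel (\<lambda>x. 2 * (cmod (\<Lambda> x))\<^sup>2 + 2 * (cmod (z0 x))\<^sup>2)"
        using L2L L2z0 unfolding L2_def by auto
      show "(\<lambda>x. (cmod (h x))\<^sup>2) \<in> borel_measurable lborel" using hmeas by measurable
      show "AE x in lborel. norm ((cmod (h x))\<^sup>2) \<le> norm (2 * (cmod (\<Lambda> x))\<^sup>2 + 2 * (cmod (z0 x))\<^sup>2)"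
      proof (rule AE_I2)
        fix x
        have a: "cmod (h x) \<le> cmod (\<Lambda> x) + cmod (z0 x)"
          unfolding h_def indicator_def by (auto intro: norm_triangle_ineq4)
        have "(cmod (h x))\<^sup>2 \<le> (cmod (\<Lambda> x) + cmod (z0 x))\<^sup>2"
          using a by (simp add: power_mono)
        also have "\<dots> \<le> 2 * (cmod (\<Lambda> x))\<^sup>2 + 2 * (cmod (z0 x))\<^sup>2"
          using power2_sum[of "cmod (\<Lambda> x)" "cmod (z0 x)"]
            sum_squares_bound[of "cmod (\<Lambda> x)" "cmod (z0 x)"] by linarith
        finally show "norm ((cmod (h x))\<^sup>2) \<le> norm (2 * (cmod (\<Lambda> x))\<^sup>2 + 2 * (cmod (z0 x))\<^sup>2)"
          by simp
      qed
    qed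
  qed
  have Fnb: "F \<noteq> bot"
  proof (cases "F = at_top")
    case True then show ?thesis using trivial_limit_at_top_linorder by simp
  next
    case False then have "F = at_bot" using F by simp
    then show ?thesis using trivial_limit_at_bot_linorder by simp
  qed
  have ipeq: "ip h \<Lambda> = ip h z0"
  proof -
    have t1: "((\<lambda>t. ip h (\<lambda>k. exp (\<i> * complex_of_real (t * omega m k)) * z t k)) \<longlongrightarrow> ip h \<Lambda>) F"
      using lim L2h unfolding weak_L2_tendsto_def by auto
    have e: "ip h (\<lambda>k. exp (\<i> * complex_of_real (t * omega m k)) * z t k) = ip h z0" for t
      unfolding ip_def
    proof (rule integral_cong_AE)
      have "z t \<in> borel_measurable lborel" using L2z unfolding L2_def by auto
      then show "(\<lambda>x. cnj (h x) * (exp (\<i> * complex_of_real (t * omega m x)) * z t x)) \<in> borel_measurable lborel"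
        using hmeas unfolding measurable_lborel2 by (intro borel_measurable_times cnj_meas rot_meas)
      show "(\<lambda>x. cnj (h x) * z0 x) \<in> borel_measurable lborel" using hmeas z0meas unfolding measurable_lborel2 by (intro borel_measurable_times cnj_meas)
      show "AE x in lborel. cnj (h x) * (exp (\<i> * complex_of_real (t * omega m x)) * z t x) = cnj (h x) * z0 x"
        using const[of t] by eventually_elim (auto simp: h_def)
    qed
    have "((\<lambda>t. ip h (\<lambda>k. exp (\<i> * complex_of_real (t * omega m k)) * z t k)) \<longlongrightarrow> ip h z0) F"
      unfolding e by simp
    then show ?thesis using t1 Fnb tendsto_unique by blast
  qed
  define g where "g k = indicator S k * (cmod (\<Lambda> k - z0 k))\<^sup>2" for k
  have gint: "integrable lborel g"
  proof -
    have "integrable lborel (\<lambda>x. (cmod (h x))\<^sup>2)" using L2h unfolding L2_def by auto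
    moreover have "(\<lambda>x. (cmod (h x))\<^sup>2) = g"
      by (auto simp: g_def h_def indicator_def)
    ultimately show ?thesis by simp
  qed
  have "ip h \<Lambda> - ip h z0 = (LINT x|lborel. cnj (h x) * \<Lambda> x - cnj (h x) * z0 x)"
    unfolding ip_def
    using L2_prod_integrable[OF L2h L2L] L2_prod_integrable[OF L2h L2z0] by simp
  also have "\<dots> = (LINT x|lborel. complex_of_real (g x))"
  proof (rule Bochner_Integration.integral_cong)
    fix x
    have "cnj (\<Lambda> x - z0 x) * \<Lambda> x - cnj (\<Lambda> x - z0 x) * z0 x = (\<Lambda> x - z0 x) * cnj (\<Lambda> x - z0 x)"
      by (simp add: algebra_simps)
    also have "\<dots> = complex_of_real ((cmod (\<Lambda> x - z0 x))\<^sup>2)"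
      by (simp only: of_real_power complex_norm_square[symmetric])
    finally have e: "cnj (\<Lambda> x - z0 x) * \<Lambda> x - cnj (\<Lambda> x - z0 x) * z0 x = complex_of_real ((cmod (\<Lambda> x - z0 x))\<^sup>2)" .
    show "cnj (h x) * \<Lambda> x - cnj (h x) * z0 x = complex_of_real (g x)"
      using e by (cases "x \<in> S") (simp_all add: g_def h_def)
  qed simp
  also have "\<dots> = complex_of_real (LINT x|lborel. g x)" by simp
  finally have "(LINT x|lborel. g x) = 0" using ipeq by simp
  then have gAE: "AE x in lborel. g x = 0"
  proof -
    have g0: "AE x in lborel. 0 \<le> g x" by (rule AE_I2) (simp add: g_def)
    show ?thesis using integral_nonneg_eq_0_iff_AE[OF gint g0] \<open>(LINT x|lborel. g x) = 0\<close> by simp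
  qed
  have eqAE: "AE k in lborel. k \<in> S \<longrightarrow> \<Lambda> k = z0 k"
    using gAE by eventually_elim (auto simp: g_def)
  have "bounded (closure {k. chi k \<noteq> 0})"
    using chi_test unfolding test_fun_def by (simp add: compact_imp_bounded)
  then obtain R where R0: "\<And>k. k \<in> closure {k. chi k \<noteq> 0} \<Longrightarrow> norm k \<le> R"
    unfolding bounded_pos by auto
  have R: "norm k \<le> R" if "chi k \<noteq> 0" for k
    using R0[of k] closure_subset[of "{k. chi k \<noteq> 0}"] that by auto
  define M where "M = sqrt (R\<^sup>2 + m\<^sup>2)"
  have omM: "omega m k \<le> M" if "k \<notin> S" for k
  proof -
    have "norm k \<le> R" using R that S_def by auto
    then have "(norm k)\<^sup>2 \<le> R\<^sup>2" by (simp add: power_mono)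
    then show ?thesis unfolding omega_def M_def by simp
  qed
  have intbound: "integrable lborel (\<lambda>k. omega m k * (cmod (\<Lambda> k))\<^sup>2)"
  proof (rule Bochner_Integration.integrable_bound)
    show "integrable lborel (\<lambda>k. omega m k * (cmod (z0 k))\<^sup>2 + M * (cmod (\<Lambda> k))\<^sup>2)"
    proof (rule Bochner_Integration.integrable_add[OF intz0])
      show "integrable lborel (\<lambda>k. M * (cmod (\<Lambda> k))\<^sup>2)"
        using L2L unfolding L2_def by (intro Bochner_Integration.integrable_mult_right) simp
    qed
    show "(\<lambda>k. omega m k * (cmod (\<Lambda> k))\<^sup>2) \<in> borel_measurable lborel"
      using omega_meas Lmeas by (intro borel_measurable_times borel_measurable_power borel_measurable_norm) auto
    show "AE k in lborel. norm (omega m k * (cmod (\<Lambda> k))\<^sup>2)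
        \<le> norm (omega m k * (cmod (z0 k))\<^sup>2 + M * (cmod (\<Lambda> k))\<^sup>2)"
      using eqAE
    proof eventually_elim
      case (elim k)
      have om0: "omega m k \<ge> 0" unfolding omega_def by simp
      show ?case
      proof (cases "k \<in> S")
        case True
        have M0: "M \<ge> 0" unfolding M_def by simp
        have a: "0 \<le> M * (cmod (\<Lambda> k))\<^sup>2" using M0 by simp
        have b: "0 \<le> omega m k * (cmod (z0 k))\<^sup>2" using om0 by simp
        have c: "\<Lambda> k = z0 k" using elim True by simp
        show ?thesis using a b c om0 by simp
      next
        case False
        have "omega m k * (cmod (\<Lambda> k))\<^sup>2 \<le> M * (cmod (\<Lambda> k))\<^sup>2"
          using omM[OF False] by (simp add: mult_right_mono)
        moreover have "M \<ge> 0" unfolding M_def by simp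
        moreover have "0 \<le> omega m k * (cmod (z0 k))\<^sup>2" using om0 by simp
        moreover have "0 \<le> omega m k * (cmod (\<Lambda> k))\<^sup>2" using om0 by simp
        ultimately show ?thesis by simp
      qed
    qed
  qed
  show ?thesis unfolding domW_def using L2L intbound by simp
qed

end
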